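(* Let $\{S(u,v),S_1(u_1,v_1)\}$ be Bertrand pair surfaces with $\{x,x_1\}$ a Bertrand D-pair ($x$ on $S$, $x_1$ on $S_1$). Let $(k_g)_1,(k_g)_2$ be the geodesic curvatures of the parametric curves of $S(u,v)$ and $(k_{g_1})_1,(k_{g_1})_2$ those of the parametric curves of $S_1(u_1,v_1)$. Let $\sigma$ be the angle between $x(s)$ and the parametric curve $v=\text{const}$ of $S$, and $\sigma_1$ the angle between $x_1(s_1)$ and the parametric curve $v_1=\text{const}$ of $S_1$. Then $$\Big(\tfrac{d\sigma}{ds} + (k_g)_1 \cos\sigma + (k_g)_2\sin\sigma\Big) - \Big(\tfrac{d\sigma_1}{ds_1} + (k_{g_1})_1\cos\sigma_1 + (k_{g_1})_2\sin\sigma_1\Big) = \lambda\Big[\Big(\tfrac{d\sigma}{ds} + (k_g)_1\cos\sigma + (k_g)_2\sin\sigma\Big)\Big(\tfrac{d\sigma_1}{ds_1} + (k_{g_1})_1\cos\sigma_1 + (k_{g_1})_2\sin\sigma_1\Big) - \tau_g\tau_{g_1}\Big].$$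
   Context: For a unit-speed curve $x(s)$ on an oriented surface $S\subset\mathbb{E}^3$, the Darboux frame is $\{T,g,n\}$ ($T$ unit tangent, $n$ unit surface normal along the curve, $g=n\times T$), with $\dot T = k_g g + k_n n$, $\dot g = -k_g T + \tau_g n$, $\dot n = -k_n T - \tau_g g$; $k_g,k_n,\tau_g$ are the geodesic curvature, normal curvature and geodesic torsion. For $x_1(s_1)$ on $S_1$ the analogous objects carry subscript $1$. $\{x,x_1\}$ is a Bertrand D-pair if there is a correspondence of points such that at corresponding points $g$ coincides with $g_1$; then $\{S,S_1\}$ are called Bertrand pair surfaces, and $x(s)=x_1(s_1)+\lambda g_1(s_1)$ at corresponding points with $\lambda$ a nonzero constant. *)

theory Defs
  imports "HOL-Analysis.Analysis"
begin

unbundle cross3_syntax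

definition Xu :: "(real * real \<Rightarrow> real^3) \<Rightarrow> real * real \<Rightarrow> real^3" where
  "Xu X p = vector_derivative (\<lambda>t. X (t, snd p)) (at (fst p))"

definition Xv :: "(real * real \<Rightarrow> real^3) \<Rightarrow> real * real \<Rightarrow> real^3" where
  "Xv X p = vector_derivative (\<lambda>t. X (fst p, t)) (at (snd p))"

definition unit_normal :: "(real * real \<Rightarrow> real^3) \<Rightarrow> real * real \<Rightarrow> real^3" where
  "unit_normal X p = (1 / norm (Xu X p \<times> Xv X p)) *\<^sub>R (Xu X p \<times> Xv X p)"

definition e1 :: "(real * real \<Rightarrow> real^3) \<Rightarrow> real * real \<Rightarrow> real^3" where
  "e1 X p = (1 / norm (Xu X p)) *\<^sub>R Xu X p"

definition e2 :: "(real * real \<Rightarrow> real^3) \<Rightarrow> real * real \<Rightarrow> real^3" where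
  "e2 X p = (1 / norm (Xv X p)) *\<^sub>R Xv X p"

definition regular_patch :: "(real * real \<Rightarrow> real^3) \<Rightarrow> (real * real) set \<Rightarrow> bool" where
  "regular_patch X U \<longleftrightarrow> open U \<and>
     (\<forall>p\<in>U. X differentiable (at p) \<and> Xu X differentiable (at p) \<and>
             Xv X differentiable (at p) \<and> Xu X p \<times> Xv X p \<noteq> 0)"

text \<open>The parametric curves are orthogonal (F = 0), the setting of Liouville's formula.\<close>
definition orthogonal_patch :: "(real * real \<Rightarrow> real^3) \<Rightarrow> (real * real) set \<Rightarrow> bool" where
  "orthogonal_patch X U \<longleftrightarrow> (\<forall>p\<in>U. Xu X p \<bullet> Xv X p = 0)"

definition tangent :: "(real \<Rightarrow> real^3) \<Rightarrow> real \<Rightarrow> real^3" where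
  "tangent c t = vector_derivative c (at t)"

text \<open>Geodesic curvature of a (not necessarily unit-speed) curve c lying on a surface with
  unit normal N along it: k_g = c'' . (N x c') / |c'|^3. For a unit-speed curve this is
  T' . g with g = N x T.\<close>
definition geodesic_curvature :: "(real \<Rightarrow> real^3) \<Rightarrow> (real \<Rightarrow> real^3) \<Rightarrow> real \<Rightarrow> real" where
  "geodesic_curvature c N t =
     (vector_derivative (tangent c) (at t) \<bullet> (N t \<times> tangent c t)) / norm (tangent c t) ^ 3"

definition darboux_g :: "(real \<Rightarrow> real^3) \<Rightarrow> (real \<Rightarrow> real^3) \<Rightarrow> real \<Rightarrow> real^3" where
  "darboux_g c N s = N s \<times> tangent c s"

text \<open>Geodesic torsion tau_g = g' . n (from g' = -k_g T + tau_g n).\<close>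
definition geodesic_torsion :: "(real \<Rightarrow> real^3) \<Rightarrow> (real \<Rightarrow> real^3) \<Rightarrow> real \<Rightarrow> real" where
  "geodesic_torsion c N s = vector_derivative (darboux_g c N) (at s) \<bullet> N s"

definition kg_ucurve :: "(real * real \<Rightarrow> real^3) \<Rightarrow> real * real \<Rightarrow> real" where
  "kg_ucurve X p = geodesic_curvature (\<lambda>t. X (t, snd p)) (\<lambda>t. unit_normal X (t, snd p)) (fst p)"

definition kg_vcurve :: "(real * real \<Rightarrow> real^3) \<Rightarrow> real * real \<Rightarrow> real" where
  "kg_vcurve X p = geodesic_curvature (\<lambda>t. X (fst p, t)) (\<lambda>t. unit_normal X (fst p, t)) (snd p)"

definition curve_on_patch ::
  "(real * real \<Rightarrow> real^3) \<Rightarrow> (real * real) set \<Rightarrow> (real \<Rightarrow> real * real) \<Rightarrow> real set \<Rightarrow>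
   (real \<Rightarrow> real^3) \<Rightarrow> (real \<Rightarrow> real) \<Rightarrow> bool" where
  "curve_on_patch X U \<alpha> I x \<sigma> \<longleftrightarrow> open I \<and>
     (\<forall>s\<in>I. \<alpha> s \<in> U \<and> \<alpha> differentiable (at s) \<and> x s = X (\<alpha> s) \<and>
        x differentiable (at s) \<and> norm (tangent x s) = 1 \<and> tangent x differentiable (at s) \<and>
        \<sigma> differentiable (at s) \<and>
        tangent x s = cos (\<sigma> s) *\<^sub>R e1 X (\<alpha> s) + sin (\<sigma> s) *\<^sub>R e2 X (\<alpha> s))"

definition bertrand_D_pair ::
  "(real \<Rightarrow> real^3) \<Rightarrow> (real \<Rightarrow> real^3) \<Rightarrow> real set \<Rightarrow>
   (real \<Rightarrow> real^3) \<Rightarrow> (real \<Rightarrow> real^3) \<Rightarrow> real set \<Rightarrow> (real \<Rightarrow> real) \<Rightarrow> real \<Rightarrow> bool" where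
  "bertrand_D_pair x n I x1 n1 I1 \<phi> lam \<longleftrightarrow>
     bij_betw \<phi> I I1 \<and> lam \<noteq> 0 \<and>
     (\<forall>s\<in>I. \<phi> differentiable (at s) \<and>
        darboux_g x n s = darboux_g x1 n1 (\<phi> s) \<and>
        x s = x1 (\<phi> s) + lam *\<^sub>R darboux_g x1 n1 (\<phi> s))"

end

theory Submission
  imports Defs
begin


lemma bb_cross: "bounded_bilinear (\<lambda>x y::real^3. x \<times> y)"
  using bilinear_cross bilinear_conv_bounded_bilinear by blast

lemma vd_inner:
  fixes f g :: "real \<Rightarrow> real^3"
  assumes "(f has_vector_derivative f') (at x)" "(g has_vector_derivative g') (at x)"
  shows "((\<lambda>t. f t \<bullet> g t) has_real_derivative (f x \<bullet> g' + f' \<bullet> g x)) (at x)"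
  using bounded_bilinear.has_vector_derivative[OF bounded_bilinear_inner assms]
  by (simp add: has_real_derivative_iff_has_vector_derivative)

lemma vd_cross:
  fixes f g :: "real \<Rightarrow> real^3"
  assumes "(f has_vector_derivative f') (at x)" "(g has_vector_derivative g') (at x)"
  shows "((\<lambda>t. f t \<times> g t) has_vector_derivative (f x \<times> g' + f' \<times> g x)) (at x)"
  using bounded_bilinear.has_vector_derivative[OF bb_cross assms] by simp

lemma chain_fd:
  assumes f: "(f has_vector_derivative f') (at s)" and g: "(g has_derivative D) (at (f s))"
  shows "((\<lambda>t. g (f t)) has_vector_derivative D f') (at s)"
proof -
  have "((g \<circ> f) has_derivative (D \<circ> (\<lambda>h. h *\<^sub>R f'))) (at s)"
    using diff_chain_at f g unfolding has_vector_derivative_def by blast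
  moreover have "D \<circ> (\<lambda>h. h *\<^sub>R f') = (\<lambda>h. h *\<^sub>R D f')"
    using has_derivative_linear[OF g] by (auto simp: linear_scale)
  ultimately show ?thesis unfolding has_vector_derivative_def o_def by simp
qed

lemma pair_u: "((\<lambda>t. (t, c)) has_vector_derivative (1::real, 0::real)) (at x)"
  unfolding has_vector_derivative_def
  by (rule has_derivative_eq_rhs, rule has_derivative_Pair[OF has_derivative_ident has_derivative_const]) auto

lemma pair_v: "((\<lambda>t. (c, t)) has_vector_derivative (0::real, 1::real)) (at x)"
  unfolding has_vector_derivative_def
  by (rule has_derivative_eq_rhs, rule has_derivative_Pair[OF has_derivative_const has_derivative_ident]) auto

lemma partial_u:
  fixes p :: "real * real"
  assumes "(X has_derivative D) (at p)"
  shows "((\<lambda>t. X (t, snd p)) has_vector_derivative D (1,0)) (at (fst p))"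
  using chain_fd[OF pair_u[of "snd p" "fst p"]] assms by simp

lemma partial_v:
  fixes p :: "real * real"
  assumes "(X has_derivative D) (at p)"
  shows "((\<lambda>t. X (fst p, t)) has_vector_derivative D (0,1)) (at (snd p))"
  using chain_fd[OF pair_v[of "fst p" "snd p"]] assms by simp

lemma lin_pair:
  assumes "linear D"
  shows "D (a, b) = a *\<^sub>R D (1,0) + b *\<^sub>R D (0,1)"
proof -
  have "(a, b) = a *\<^sub>R (1::real,0::real) + b *\<^sub>R (0,1)" by simp
  then show ?thesis using assms by (metis linear_add linear_scale)
qed

lemma zero_deriv:
  assumes "(h has_real_derivative d) (at s)" "open S" "s \<in> S" "\<And>t. t \<in> S \<Longrightarrow> h t = 0"
  shows "d = 0"
proof -
  have "((\<lambda>_. 0) has_real_derivative d) (at s)"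
    using has_field_derivative_transform_within_open[OF assms(1-3)] assms(4) by metis
  then show ?thesis using DERIV_const DERIV_unique by blast
qed

lemma normalize_vd:
  fixes w :: "real \<Rightarrow> real^3"
  assumes w: "(w has_vector_derivative w') (at s)" and nz: "w s \<noteq> 0"
  shows "((\<lambda>t. (1 / norm (w t)) *\<^sub>R w t) has_vector_derivative
      ((1 / norm (w s)) *\<^sub>R w' - ((w s \<bullet> w') / norm (w s) ^ 3) *\<^sub>R w s)) (at s)"
proof -
  have r: "((\<lambda>t. norm (w t)) has_real_derivative (w' \<bullet> sgn (w s))) (at s)"
    using chain_fd[OF w has_derivative_norm[OF nz]]
    by (simp add: has_real_derivative_iff_has_vector_derivative)
  have nn: "norm (w s) \<noteq> 0" using nz by simp
  have i: "((\<lambda>t. inverse (norm (w t))) has_real_derivative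
       - (inverse (norm (w s)) * (w' \<bullet> sgn (w s)) * inverse (norm (w s)))) (at s)"
    by (rule DERIV_inverse'[OF r nn])
  have "((\<lambda>t. inverse (norm (w t)) *\<^sub>R w t) has_vector_derivative
      (inverse (norm (w s)) *\<^sub>R w' + (- (inverse (norm (w s)) * (w' \<bullet> sgn (w s)) * inverse (norm (w s)))) *\<^sub>R w s)) (at s)"
    by (rule has_vector_derivative_scaleR[OF i w])
  moreover have "inverse (norm (w s)) *\<^sub>R w' + (- (inverse (norm (w s)) * (w' \<bullet> sgn (w s)) * inverse (norm (w s)))) *\<^sub>R w s
     = (1 / norm (w s)) *\<^sub>R w' - ((w s \<bullet> w') / norm (w s) ^ 3) *\<^sub>R w s"
    using nn by (simp add: sgn_div_norm inner_commute power3_eq_cube field_simps)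
  ultimately show ?thesis by (simp only: inverse_eq_divide)
qed

lemma cross_cross: "((a::real^3) \<times> b) \<times> c = (a \<bullet> c) *\<^sub>R b - (b \<bullet> c) *\<^sub>R a"
  unfolding vec_eq_iff forall_3 by (simp add: cross3_def inner_vec_def sum_3 algebra_simps)

lemma gr: fixes d1 d2 d3 u1 u2 u3 v1 v2 v3 :: real
  shows "(d1 * (u2 * v3-u3 * v2) + d2 * (u3 * v1-u1 * v3) + d3 * (u1 * v2-u2 * v1))^2 = (d1 * d1+d2 * d2+d3 * d3) * (u1 * u1+u2 * u2+u3 * u3) * (v1 * v1+v2 * v2+v3 * v3) - (d1 * d1+d2 * d2+d3 * d3) * (u1 * v1+u2 * v2+u3 * v3)^2 - (d1 * u1+d2 * u2+d3 * u3)^2 * (v1 * v1+v2 * v2+v3 * v3) - (d1 * v1+d2 * v2+d3 * v3)^2 * (u1 * u1+u2 * u2+u3 * u3) + 2 * (d1 * u1+d2 * u2+d3 * u3) * (d1 * v1+d2 * v2+d3 * v3) * (u1 * v1+u2 * v2+u3 * v3)"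
  by algebra

lemma gram:
  fixes D u v :: "real^3"
  shows "(D \<bullet> (u \<times> v))^2 = (D\<bullet>D) * (u\<bullet>u) * (v\<bullet>v) - (D\<bullet>D) * (u\<bullet>v)^2 - (D\<bullet>u)^2 * (v\<bullet>v) - (D\<bullet>v)^2 * (u\<bullet>u) + 2 * (D\<bullet>u) * (D\<bullet>v) * (u\<bullet>v)"
proof -
  have c: "D \<bullet> (u \<times> v) = D$1 * (u$2 * v$3-u$3 * v$2) + D$2 * (u$3 * v$1-u$1 * v$3) + D$3 * (u$1 * v$2-u$2 * v$1)"
    by (simp add: cross3_def inner_vec_def sum_3)
  have i: "\<And>a b::real^3. a \<bullet> b = a$1 * b$1+a$2 * b$2+a$3 * b$3"
    by (simp add: inner_vec_def sum_3)
  show ?thesis unfolding c unfolding i by (rule gr)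
qed




lemma final_alg:
  fixes p a b q lam k k1 tau tau1 :: real
  assumes "q = a^2 + b^2" "k = -(p^2 * (a + lam * q))" "tau = p^2 * b"
    "p^2 * (1 + 2*lam*a + lam^2*q) = 1" "k1 = -a" "tau1 = b"
  shows "k - k1 = lam * (k * k1 - tau * tau1)"
proof -
  have "k - k1 - lam * (k * k1 - tau * tau1) = - a * (p^2 * (1 + 2*lam*a + lam^2*q) - 1)"
    using assms(1,2,3,5,6) by algebra
  then show ?thesis using assms(4) by simp
qed

lemma vd_cscale: "(g has_vector_derivative g') F \<Longrightarrow> ((\<lambda>x. c *\<^sub>R g x) has_vector_derivative c *\<^sub>R g') F"
  by (rule bounded_linear.has_vector_derivative[OF bounded_linear_scaleR_right])

lemma cross_back:
  assumes "norm (a::real^3) = 1" "a \<bullet> b = 0" shows "a \<times> (b \<times> a) = b"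
proof -
  have aa: "a \<bullet> a = 1" using assms(1) by (simp add: power2_norm_eq_inner[symmetric])
  have "a \<times> (b \<times> a) = - ((b \<times> a) \<times> a)" by (rule cross_skew)
  also have "\<dots> = (a \<bullet> a) *\<^sub>R b - (b \<bullet> a) *\<^sub>R a" by (simp add: cross_cross)
  also have "\<dots> = b" using aa assms(2) by (simp add: inner_commute)
  finally show ?thesis .
qed

lemma bertrand_core:
  fixes x x1 N N1 :: "real \<Rightarrow> real^3" and \<phi> :: "real \<Rightarrow> real"
  assumes oI: "open I" and sI: "s \<in> I" and oI1: "open I1" and sI1: "\<phi> s \<in> I1"
    and dphi: "(\<phi> has_real_derivative p) (at s)"
    and dx1: "(x1 has_vector_derivative tangent x1 (\<phi> s)) (at (\<phi> s))"
    and dG1: "(darboux_g x1 N1 has_vector_derivative D) (at (\<phi> s))"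
    and dT1: "(tangent x1 has_vector_derivative T1') (at (\<phi> s))"
    and dT: "(tangent x has_vector_derivative T') (at s)"
    and u1: "norm (N1 (\<phi> s)) = 1" "norm (tangent x1 (\<phi> s)) = 1" "tangent x1 (\<phi> s) \<bullet> N1 (\<phi> s) = 0"
    and u: "norm (N s) = 1" "norm (tangent x s) = 1" "tangent x s \<bullet> N s = 0"
    and g1u: "\<And>t. t \<in> I1 \<Longrightarrow> darboux_g x1 N1 t \<bullet> darboux_g x1 N1 t = 1"
    and pr: "\<And>t. t \<in> I \<Longrightarrow> darboux_g x N t = darboux_g x1 N1 (\<phi> t) \<and>
                 x t = x1 (\<phi> t) + lam *\<^sub>R darboux_g x1 N1 (\<phi> t)"
  shows "T' \<bullet> darboux_g x N s - T1' \<bullet> darboux_g x1 N1 (\<phi> s)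
     = lam * ((T' \<bullet> darboux_g x N s) * (T1' \<bullet> darboux_g x1 N1 (\<phi> s))
              - geodesic_torsion x N s * geodesic_torsion x1 N1 (\<phi> s))"
proof -
  define G1 where "G1 = darboux_g x1 N1"
  define G where "G = darboux_g x N"
  define s1 where "s1 = \<phi> s"
  define T1 where "T1 = tangent x1 s1"
  define T where "T = tangent x s"
  have dphiv: "(\<phi> has_vector_derivative p) (at s)"
    using dphi by (simp add: has_real_derivative_iff_has_vector_derivative)
  have dG: "(G has_vector_derivative p *\<^sub>R D) (at s)"
  proof -
    have "((G1 \<circ> \<phi>) has_vector_derivative p *\<^sub>R D) (at s)"
      using vector_diff_chain_at[OF dphiv] dG1 unfolding G1_def by blast
    then show ?thesis
      by (rule has_vector_derivative_transform_within_open[OF _ oI sI]) (use pr in \<open>auto simp: G_def G1_def\<close>)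
  qed
  have dxx: "(x has_vector_derivative p *\<^sub>R (T1 + lam *\<^sub>R D)) (at s)"
  proof -
    have a: "((x1 \<circ> \<phi>) has_vector_derivative p *\<^sub>R T1) (at s)"
      using vector_diff_chain_at[OF dphiv] dx1 unfolding T1_def s1_def by blast
    have b: "((G1 \<circ> \<phi>) has_vector_derivative p *\<^sub>R D) (at s)"
      using vector_diff_chain_at[OF dphiv] dG1 unfolding G1_def by blast
    have "((\<lambda>t. (x1 \<circ> \<phi>) t + lam *\<^sub>R (G1 \<circ> \<phi>) t) has_vector_derivative
           p *\<^sub>R T1 + lam *\<^sub>R (p *\<^sub>R D)) (at s)"
      by (intro has_vector_derivative_add vd_cscale a b)
    then have "((\<lambda>t. (x1 \<circ> \<phi>) t + lam *\<^sub>R (G1 \<circ> \<phi>) t) has_vector_derivative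
           p *\<^sub>R (T1 + lam *\<^sub>R D)) (at s)"
      by (simp add: algebra_simps)
    then show ?thesis
      by (rule has_vector_derivative_transform_within_open[OF _ oI sI]) (use pr in \<open>auto simp: G1_def\<close>)
  qed
  have Teq: "T = p *\<^sub>R (T1 + lam *\<^sub>R D)"
    unfolding T_def tangent_def using dxx by (rule vector_derivative_at)
  have tau: "geodesic_torsion x N s = (p *\<^sub>R D) \<bullet> N s"
    unfolding geodesic_torsion_def using vector_derivative_at[OF dG] G_def by simp
  have tau1: "geodesic_torsion x1 N1 s1 = D \<bullet> N1 s1"
    unfolding geodesic_torsion_def using vector_derivative_at[OF dG1] s1_def by simp
  have aT1: "D \<bullet> T1 = - (T1' \<bullet> G1 s1)"
  proof -
    have "((\<lambda>t. G1 t \<bullet> tangent x1 t) has_real_derivative (G1 s1 \<bullet> T1' + D \<bullet> tangent x1 s1)) (at s1)"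
      using vd_inner dG1 dT1 unfolding G1_def s1_def by blast
    then have "G1 s1 \<bullet> T1' + D \<bullet> tangent x1 s1 = 0"
      by (rule zero_deriv[where S=UNIV]) (auto simp: G1_def darboux_g_def dot_cross_self)
    then show ?thesis by (simp add: T1_def inner_commute)
  qed
  have DG1: "D \<bullet> G1 s1 = 0"
  proof -
    have "((\<lambda>t. G1 t \<bullet> G1 t - 1) has_real_derivative (G1 s1 \<bullet> D + D \<bullet> G1 s1)) (at s1)"
      using DERIV_diff[OF vd_inner[OF dG1 dG1] DERIV_const[of 1]] unfolding G1_def s1_def by simp
    then have "G1 s1 \<bullet> D + D \<bullet> G1 s1 = 0"
      by (rule zero_deriv[OF _ oI1]) (use sI1 g1u in \<open>auto simp: s1_def G1_def\<close>)
    then show ?thesis by (simp add: inner_commute)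
  qed
  have N1T1: "N1 s1 \<bullet> T1 = 0" using u1(3) by (simp add: T1_def s1_def inner_commute)
  have N1N1: "N1 s1 \<bullet> N1 s1 = 1" using u1(1) by (simp add: s1_def power2_norm_eq_inner[symmetric])
  have T1T1: "T1 \<bullet> T1 = 1" using u1(2) by (simp add: T1_def s1_def power2_norm_eq_inner[symmetric])
  have G1eq: "G1 s1 = N1 s1 \<times> T1" by (simp add: G1_def darboux_g_def T1_def)
  have DD: "D \<bullet> D = (D \<bullet> T1)^2 + (D \<bullet> N1 s1)^2"
    using gram[of D "N1 s1" T1] N1T1 N1N1 T1T1 DG1 G1eq by simp
  have kk: "T' \<bullet> G s = - ((p *\<^sub>R D) \<bullet> T)"
  proof -
    have "((\<lambda>t. G t \<bullet> tangent x t) has_real_derivative (G s \<bullet> T' + (p *\<^sub>R D) \<bullet> tangent x s)) (at s)"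
      using vd_inner dG dT by blast
    then have "G s \<bullet> T' + (p *\<^sub>R D) \<bullet> tangent x s = 0"
      by (rule zero_deriv[where S=UNIV]) (auto simp: G_def darboux_g_def dot_cross_self)
    then show ?thesis by (simp add: T_def inner_commute)
  qed
  have Ns: "N s = T \<times> G s"
    using cross_back[of T "N s"] u by (simp add: T_def G_def darboux_g_def)
  have N1s: "N1 s1 = T1 \<times> G1 s1"
    using cross_back[of T1 "N1 s1"] u1 by (simp add: T1_def G1_def darboux_g_def s1_def)
  have Gs: "G s = G1 s1" using pr[OF sI] by (simp add: G_def G1_def s1_def)
  have tauv: "geodesic_torsion x N s = p^2 * (D \<bullet> N1 s1)"
  proof -
    have "geodesic_torsion x N s = p * (D \<bullet> (T \<times> G1 s1))" using tau Ns Gs by simp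
    also have "\<dots> = p * (D \<bullet> ((p *\<^sub>R T1) \<times> G1 s1) + D \<bullet> ((p * lam) *\<^sub>R (D \<times> G1 s1)))"
      unfolding Teq by (simp add: cross_add_left cross_mult_left inner_add_right scaleR_add_right)
    also have "\<dots> = p^2 * (D \<bullet> N1 s1)"
      using N1s by (simp add: cross_mult_left dot_cross_self power2_eq_square)
    finally show ?thesis .
  qed
  have TT: "p^2 * (1 + 2 * lam * (D \<bullet> T1) + lam^2 * (D \<bullet> D)) = 1"
  proof -
    have "T \<bullet> T = 1" using u(2) by (simp add: T_def power2_norm_eq_inner[symmetric])
    then show ?thesis unfolding Teq
      by (simp add: inner_add_left inner_add_right T1T1 inner_commute[of D T1] power2_eq_square algebra_simps)
  qed
  have kv: "T' \<bullet> G s = - (p^2 * (D \<bullet> T1 + lam * (D \<bullet> D)))"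
    unfolding kk Teq by (simp add: inner_add_right power2_eq_square algebra_simps)
  have "T' \<bullet> G s - T1' \<bullet> G1 s1 = lam * ((T' \<bullet> G s) * (T1' \<bullet> G1 s1) - geodesic_torsion x N s * geodesic_torsion x1 N1 s1)"
    by (rule final_alg[OF DD kv tauv TT]) (use aT1 tau1 in auto)
  then show ?thesis unfolding G_def G1_def s1_def .
qed



lemma norm_perp:
  fixes w w' :: "real^3" assumes "w \<noteq> 0"
  shows "((1 / norm w) *\<^sub>R w' - ((w \<bullet> w') / norm w ^ 3) *\<^sub>R w) \<bullet> ((1 / norm w) *\<^sub>R w) = 0"
proof -
  have n: "norm w \<noteq> 0" using assms by simp
  have ww: "w \<bullet> w = (norm w)^2" by (simp add: power2_norm_eq_inner)
  show ?thesis using n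
    by (simp add: inner_diff_left ww inner_commute[of w' w] power2_eq_square power3_eq_cube field_simps)
qed

lemma patch_facts:
  assumes rp: "regular_patch X U" and op: "orthogonal_patch X U" and q: "q \<in> U"
  shows "Xu X q \<noteq> 0" "Xv X q \<noteq> 0" "Xu X q \<bullet> Xv X q = 0"
    "e1 X q \<bullet> e1 X q = 1" "e2 X q \<bullet> e2 X q = 1" "e1 X q \<bullet> e2 X q = 0"
    "unit_normal X q = e1 X q \<times> e2 X q"
    "Xu X q = norm (Xu X q) *\<^sub>R e1 X q" "Xv X q = norm (Xv X q) *\<^sub>R e2 X q"
proof -
  have cnz: "Xu X q \<times> Xv X q \<noteq> 0" using rp q by (simp add: regular_patch_def)
  show u: "Xu X q \<noteq> 0" using cnz by auto
  show v: "Xv X q \<noteq> 0" using cnz by auto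
  show uv: "Xu X q \<bullet> Xv X q = 0" using op q by (simp add: orthogonal_patch_def)
  show "e1 X q \<bullet> e1 X q = 1" using u by (simp add: e1_def dot_square_norm power2_eq_square)
  show "e2 X q \<bullet> e2 X q = 1" using v by (simp add: e2_def dot_square_norm power2_eq_square)
  show "e1 X q \<bullet> e2 X q = 0" using uv by (simp add: e1_def e2_def)
  have "(norm (Xu X q \<times> Xv X q))^2 = (norm (Xu X q) * norm (Xv X q))^2"
    using norm_cross_dot[of "Xu X q" "Xv X q"] uv by simp
  then have nuv: "norm (Xu X q \<times> Xv X q) = norm (Xu X q) * norm (Xv X q)"
    by simp
  show "unit_normal X q = e1 X q \<times> e2 X q"
    by (simp add: unit_normal_def e1_def e2_def cross_mult_left cross_mult_right nuv)
  show "Xu X q = norm (Xu X q) *\<^sub>R e1 X q" using u by (simp add: e1_def)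
  show "Xv X q = norm (Xv X q) *\<^sub>R e2 X q" using v by (simp add: e2_def)
qed

lemma frame_cross:
  fixes e1 e2 :: "real^3"
  assumes "e1 \<bullet> e1 = 1" "e2 \<bullet> e2 = 1" "e1 \<bullet> e2 = 0"
  shows "(e1 \<times> e2) \<times> e1 = e2" "(e1 \<times> e2) \<times> e2 = - e1"
  using assms by (simp_all add: cross_cross inner_commute)

lemma fd_works:
  assumes "f differentiable (at p)" shows "(f has_derivative frechet_derivative f (at p)) (at p)"
  using assms frechet_derivative_works by blast

lemma liouville:
  assumes rp: "regular_patch X U" and op: "orthogonal_patch X U"
    and cp: "curve_on_patch X U \<alpha> I x \<sigma>" and sI: "s \<in> I"
  shows "vector_derivative (tangent x) (at s) \<bullet> darboux_g x (\<lambda>s. unit_normal X (\<alpha> s)) s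
         = deriv \<sigma> s + kg_ucurve X (\<alpha> s) * cos (\<sigma> s) + kg_vcurve X (\<alpha> s) * sin (\<sigma> s)"
proof -
  define p where "p = \<alpha> s"
  have oU: "open U" using rp by (simp add: regular_patch_def)
  have oI: "open I" using cp by (simp add: curve_on_patch_def)
  have cpI: "\<And>t. t \<in> I \<Longrightarrow> \<alpha> t \<in> U \<and> \<alpha> differentiable (at t) \<and> x t = X (\<alpha> t) \<and>
        x differentiable (at t) \<and> norm (tangent x t) = 1 \<and> tangent x differentiable (at t) \<and>
        \<sigma> differentiable (at t) \<and>
        tangent x t = cos (\<sigma> t) *\<^sub>R e1 X (\<alpha> t) + sin (\<sigma> t) *\<^sub>R e2 X (\<alpha> t)"
    using cp unfolding curve_on_patch_def by blast
  have rpU: "\<And>q. q \<in> U \<Longrightarrow> X differentiable (at q) \<and> Xu X differentiable (at q) \<and>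
             Xv X differentiable (at q) \<and> Xu X q \<times> Xv X q \<noteq> 0"
    using rp unfolding regular_patch_def by blast
  have pU: "p \<in> U" using cpI[OF sI] p_def by simp
  note pf = patch_facts[OF rp op pU]
  define DX where "DX = frechet_derivative X (at p)"
  define DU where "DU = frechet_derivative (Xu X) (at p)"
  define DV where "DV = frechet_derivative (Xv X) (at p)"
  have hX: "(X has_derivative DX) (at p)" using rpU[OF pU] DX_def fd_works by blast
  have hU: "(Xu X has_derivative DU) (at p)" using rpU[OF pU] DU_def fd_works by blast
  have hV: "(Xv X has_derivative DV) (at p)" using rpU[OF pU] DV_def fd_works by blast
  have XuD: "Xu X p = DX (1,0)"
    unfolding Xu_def by (rule vector_derivative_at[OF partial_u[OF hX]])
  have XvD: "Xv X p = DX (0,1)"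
    unfolding Xv_def by (rule vector_derivative_at[OF partial_v[OF hX]])
  define nu where "nu = norm (Xu X p)"
  define nv where "nv = norm (Xv X p)"
  have nu0: "nu > 0" using pf(1) nu_def by simp
  have nv0: "nv > 0" using pf(2) nv_def by simp
  define av where "av = vector_derivative \<alpha> (at s)"
  have da: "(\<alpha> has_vector_derivative av) (at s)"
    using cpI[OF sI] av_def vector_derivative_works by blast
  obtain a b where ab: "av = (a,b)" by (cases av)
  have Tval: "tangent x s = a *\<^sub>R Xu X p + b *\<^sub>R Xv X p"
  proof -
    have "((\<lambda>t. X (\<alpha> t)) has_vector_derivative DX av) (at s)"
      using chain_fd[OF da] hX p_def by simp
    then have "(x has_vector_derivative DX av) (at s)"
      by (rule has_vector_derivative_transform_within_open[OF _ oI sI]) (use cpI in auto)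
    then have "tangent x s = DX av" unfolding tangent_def by (rule vector_derivative_at)
    then show ?thesis using lin_pair[OF has_derivative_linear[OF hX], of a b] ab XuD XvD by simp
  qed
  have Tcs: "tangent x s = cos (\<sigma> s) *\<^sub>R e1 X p + sin (\<sigma> s) *\<^sub>R e2 X p"
    using cpI[OF sI] p_def by simp
  have u8: "Xu X p = nu *\<^sub>R e1 X p" unfolding nu_def by (rule pf(8))
  have v8: "Xv X p = nv *\<^sub>R e2 X p" unfolding nv_def by (rule pf(9))
  have e21: "e2 X p \<bullet> e1 X p = 0" using pf(6) by (simp add: inner_commute)
  have Tval2: "tangent x s = (a * nu) *\<^sub>R e1 X p + (b * nv) *\<^sub>R e2 X p"
    unfolding Tval u8 v8 by simp
  have a_val: "a = cos (\<sigma> s) / nu"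
  proof -
    have "tangent x s \<bullet> e1 X p = a * nu"
      unfolding Tval2 by (simp add: inner_add_left pf(4) e21)
    moreover have "tangent x s \<bullet> e1 X p = cos (\<sigma> s)"
      unfolding Tcs by (simp add: inner_add_left pf(4) e21)
    ultimately show ?thesis using nu0 by (simp add: field_simps)
  qed
  have b_val: "b = sin (\<sigma> s) / nv"
  proof -
    have "tangent x s \<bullet> e2 X p = b * nv"
      unfolding Tval2 by (simp add: inner_add_left pf(5) pf(6))
    moreover have "tangent x s \<bullet> e2 X p = sin (\<sigma> s)"
      unfolding Tcs by (simp add: inner_add_left pf(5) pf(6))
    ultimately show ?thesis using nv0 by (simp add: field_simps)
  qed
  have cpT: "\<And>t. t \<in> I \<Longrightarrow> tangent x t = cos (\<sigma> t) *\<^sub>R e1 X (\<alpha> t) + sin (\<sigma> t) *\<^sub>R e2 X (\<alpha> t)"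
    using cpI by blast
  have cpU: "\<And>t. t \<in> I \<Longrightarrow> \<alpha> t \<in> U" using cpI by blast
  define w where "w = (\<lambda>t. Xu X (\<alpha> t))"
  define z where "z = (\<lambda>t. Xv X (\<alpha> t))"
  have dw: "(w has_vector_derivative DU av) (at s)"
    using chain_fd[OF da] hU p_def w_def by simp
  have dz: "(z has_vector_derivative DV av) (at s)"
    using chain_fd[OF da] hV p_def z_def by simp
  have ws: "w s = Xu X p" "z s = Xv X p" by (simp_all add: w_def z_def p_def)
  define E1' where "E1' = (1 / norm (w s)) *\<^sub>R DU av - ((w s \<bullet> DU av) / norm (w s) ^ 3) *\<^sub>R w s"
  define E2' where "E2' = (1 / norm (z s)) *\<^sub>R DV av - ((z s \<bullet> DV av) / norm (z s) ^ 3) *\<^sub>R z s"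
  have e1fun: "(\<lambda>t. e1 X (\<alpha> t)) = (\<lambda>t. (1 / norm (w t)) *\<^sub>R w t)" by (simp add: e1_def w_def fun_eq_iff)
  have e2fun: "(\<lambda>t. e2 X (\<alpha> t)) = (\<lambda>t. (1 / norm (z t)) *\<^sub>R z t)" by (simp add: e2_def z_def fun_eq_iff)
  have dE1: "((\<lambda>t. e1 X (\<alpha> t)) has_vector_derivative E1') (at s)"
    unfolding e1fun E1'_def by (rule normalize_vd[OF dw]) (simp add: ws pf(1))
  have dE2: "((\<lambda>t. e2 X (\<alpha> t)) has_vector_derivative E2') (at s)"
    unfolding e2fun E2'_def by (rule normalize_vd[OF dz]) (simp add: ws pf(2))
  have e1s: "e1 X p = (1 / norm (w s)) *\<^sub>R w s" by (simp add: ws e1_def)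
  have e2s: "e2 X p = (1 / norm (z s)) *\<^sub>R z s" by (simp add: ws e2_def)
  have E1e1: "E1' \<bullet> e1 X p = 0" unfolding E1'_def e1s by (rule norm_perp) (simp add: ws pf(1))
  have E2e2: "E2' \<bullet> e2 X p = 0" unfolding E2'_def e2s by (rule norm_perp) (simp add: ws pf(2))
  have E12: "E1' \<bullet> e2 X p + e1 X p \<bullet> E2' = 0"
  proof -
    have "((\<lambda>t. e1 X (\<alpha> t) \<bullet> e2 X (\<alpha> t)) has_real_derivative (e1 X (\<alpha> s) \<bullet> E2' + E1' \<bullet> e2 X (\<alpha> s))) (at s)"
      by (rule vd_inner[OF dE1 dE2])
    then have "e1 X (\<alpha> s) \<bullet> E2' + E1' \<bullet> e2 X (\<alpha> s) = 0"
      by (rule zero_deriv[OF _ oI sI]) (meson cpU patch_facts(6)[OF rp op])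
    then show ?thesis by (simp add: p_def add.commute)
  qed
  define A where "A = E1' \<bullet> e2 X p"
  have E21: "E2' \<bullet> e1 X p = - A" using E12 unfolding A_def by (simp add: inner_commute)
  have ue2: "Xu X p \<bullet> e2 X p = 0" by (subst u8) (simp add: pf(6))
  have Aval: "A = (1 / nu) * (DU av \<bullet> e2 X p)"
    unfolding A_def E1'_def by (simp add: inner_diff_left ws ue2 nu_def)
  have ds: "(\<sigma> has_real_derivative deriv \<sigma> s) (at s)"
    using cpI[OF sI] DERIV_deriv_iff_real_differentiable by blast
  have dc: "((\<lambda>t. cos (\<sigma> t)) has_real_derivative (- sin (\<sigma> s) * deriv \<sigma> s)) (at s)"
    using DERIV_fun_cos[OF ds] .
  have dsn: "((\<lambda>t. sin (\<sigma> t)) has_real_derivative (cos (\<sigma> s) * deriv \<sigma> s)) (at s)"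
    using DERIV_fun_sin[OF ds] .
  define T' where "T' = (cos (\<sigma> s) *\<^sub>R E1' + (- sin (\<sigma> s) * deriv \<sigma> s) *\<^sub>R e1 X p)
      + (sin (\<sigma> s) *\<^sub>R E2' + (cos (\<sigma> s) * deriv \<sigma> s) *\<^sub>R e2 X p)"
  have dTf: "((\<lambda>t. cos (\<sigma> t) *\<^sub>R e1 X (\<alpha> t) + sin (\<sigma> t) *\<^sub>R e2 X (\<alpha> t)) has_vector_derivative T') (at s)"
    unfolding T'_def p_def by (intro has_vector_derivative_add has_vector_derivative_scaleR dc dsn dE1 dE2)
  have vT: "vector_derivative (tangent x) (at s) = T'"
    by (rule vector_derivative_at, rule has_vector_derivative_transform_within_open[OF dTf oI sI]) (simp add: cpT)
  have gval: "darboux_g x (\<lambda>s. unit_normal X (\<alpha> s)) s = cos (\<sigma> s) *\<^sub>R e2 X p - sin (\<sigma> s) *\<^sub>R e1 X p"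
    unfolding darboux_g_def Tcs using frame_cross[OF pf(4) pf(5) pf(6)] pf(7)
    by (simp add: p_def[symmetric] cross_add_right cross_mult_right)
  have main0: "T' \<bullet> (cos (\<sigma> s) *\<^sub>R e2 X p - sin (\<sigma> s) *\<^sub>R e1 X p)
     = (cos (\<sigma> s))^2 * A + (sin (\<sigma> s))^2 * A + ((sin (\<sigma> s))^2 + (cos (\<sigma> s))^2) * deriv \<sigma> s"
    unfolding T'_def
    by (simp add: inner_add_left inner_diff_right E1e1 E2e2 E21 pf(4) pf(5) pf(6)
        inner_commute[of "e2 X p" "e1 X p"] A_def[symmetric] power2_eq_square algebra_simps)
       (simp add: distrib_left[symmetric])
  have main: "T' \<bullet> (cos (\<sigma> s) *\<^sub>R e2 X p - sin (\<sigma> s) *\<^sub>R e1 X p) = deriv \<sigma> s + A"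
  proof -
    have h: "(cos (\<sigma> s))^2 * A + (sin (\<sigma> s))^2 * A = A"
      by (simp add: distrib_right[symmetric])
    have h3: "((sin (\<sigma> s))^2 + (cos (\<sigma> s))^2) * deriv \<sigma> s = deriv \<sigma> s" by simp
    show ?thesis using main0 h h3 by linarith
  qed
  have tu: "tangent (\<lambda>t. X (t, snd p)) = (\<lambda>t. Xu X (t, snd p))" by (simp add: tangent_def Xu_def fun_eq_iff)
  have tv: "tangent (\<lambda>t. X (fst p, t)) = (\<lambda>t. Xv X (fst p, t))" by (simp add: tangent_def Xv_def fun_eq_iff)
  have k1: "kg_ucurve X p = (DU (1,0) \<bullet> (unit_normal X p \<times> Xu X p)) / nu^3"
    unfolding kg_ucurve_def geodesic_curvature_def tu
    using vector_derivative_at[OF partial_u[OF hU]] by (simp add: nu_def)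
  have k2: "kg_vcurve X p = (DV (0,1) \<bullet> (unit_normal X p \<times> Xv X p)) / nv^3"
    unfolding kg_vcurve_def geodesic_curvature_def tv
    using vector_derivative_at[OF partial_v[OF hV]] by (simp add: nv_def)
  have NXu: "unit_normal X p \<times> Xu X p = nu *\<^sub>R e2 X p"
    by (subst u8) (simp add: pf(7) cross_mult_right frame_cross[OF pf(4,5,6)])
  have NXv: "unit_normal X p \<times> Xv X p = - (nv *\<^sub>R e1 X p)"
    by (subst v8) (simp add: pf(7) cross_mult_right frame_cross[OF pf(4,5,6)])
  have mix: "DU (0,1) \<bullet> Xv X p + Xu X p \<bullet> DV (0,1) = 0"
  proof -
    obtain \<epsilon> where \<epsilon>: "\<epsilon> > 0" "ball p \<epsilon> \<subseteq> U" using oU pU open_contains_ball by blast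
    have "((\<lambda>t. Xu X (fst p, t) \<bullet> Xv X (fst p, t)) has_real_derivative
        (Xu X (fst p, snd p) \<bullet> DV (0,1) + DU (0,1) \<bullet> Xv X (fst p, snd p))) (at (snd p))"
      by (rule vd_inner[OF partial_v[OF hU] partial_v[OF hV]])
    then have "Xu X (fst p, snd p) \<bullet> DV (0,1) + DU (0,1) \<bullet> Xv X (fst p, snd p) = 0"
    proof (rule zero_deriv[where S="ball (snd p) \<epsilon>"])
      show "open (ball (snd p) \<epsilon>)" by simp
      show "snd p \<in> ball (snd p) \<epsilon>" using \<epsilon> by simp
      fix t assume "t \<in> ball (snd p) \<epsilon>"
      then have "(fst p, t) \<in> ball p \<epsilon>" by (cases p) (simp add: dist_Pair_Pair)
      then show "Xu X (fst p, t) \<bullet> Xv X (fst p, t) = 0" using \<epsilon>(2) patch_facts(3)[OF rp op] by blast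
    qed
    then show ?thesis by (simp add: add.commute)
  qed
  define P where "P = DU (1,0) \<bullet> e2 X p"
  define Q where "Q = DV (0,1) \<bullet> e1 X p"
  define R where "R = DU (0,1) \<bullet> e2 X p"
  have k1v: "kg_ucurve X p = nu * P / nu^3" unfolding k1 NXu P_def by simp
  have k2v: "kg_vcurve X p = - (nv * Q / nv^3)" unfolding k2 NXv Q_def by simp
  have mixv: "nv * R + nu * Q = 0"
    using mix unfolding R_def Q_def by (subst (asm) u8, subst (asm) v8) (simp add: inner_commute)
  have Av: "A = (1 / nu) * (a * P + b * R)"
    unfolding Aval P_def R_def using lin_pair[OF has_derivative_linear[OF hU], of a b] ab
    by (simp add: inner_add_left)
  have Afin: "A = kg_ucurve X p * cos (\<sigma> s) + kg_vcurve X p * sin (\<sigma> s)"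
  proof -
    have R: "R = - (nu * Q / nv)" using mixv nv0 by (simp add: field_simps)
    show ?thesis unfolding Av k1v k2v a_val b_val R using nu0 nv0
      by (simp add: field_simps power3_eq_cube power2_eq_square)
  qed
  show ?thesis using vT gval main Afin p_def by simp
qed




lemma frame:
  assumes rp: "regular_patch X U" and op: "orthogonal_patch X U"
    and cp: "curve_on_patch X U \<alpha> I x \<sigma>" and tI: "t \<in> I"
  shows "norm (unit_normal X (\<alpha> t)) = 1" "tangent x t \<bullet> unit_normal X (\<alpha> t) = 0"
    "darboux_g x (\<lambda>s. unit_normal X (\<alpha> s)) t \<bullet> darboux_g x (\<lambda>s. unit_normal X (\<alpha> s)) t = 1"
    "\<exists>D. (darboux_g x (\<lambda>s. unit_normal X (\<alpha> s)) has_vector_derivative D) (at t)"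
proof -
  have cpI: "\<alpha> t \<in> U \<and> \<alpha> differentiable (at t) \<and> x t = X (\<alpha> t) \<and>
        x differentiable (at t) \<and> norm (tangent x t) = 1 \<and> tangent x differentiable (at t) \<and>
        \<sigma> differentiable (at t) \<and>
        tangent x t = cos (\<sigma> t) *\<^sub>R e1 X (\<alpha> t) + sin (\<sigma> t) *\<^sub>R e2 X (\<alpha> t)"
    using cp tI unfolding curve_on_patch_def by blast
  define q where "q = \<alpha> t"
  have qU: "q \<in> U" using cpI q_def by simp
  have rpU: "X differentiable (at q) \<and> Xu X differentiable (at q) \<and>
             Xv X differentiable (at q) \<and> Xu X q \<times> Xv X q \<noteq> 0"
    using rp qU unfolding regular_patch_def by blast
  note pf = patch_facts[OF rp op qU]
  have Nq: "norm (unit_normal X q) = 1"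
  proof -
    have "(norm (e1 X q \<times> e2 X q))^2 = 1"
      using norm_cross_dot[of "e1 X q" "e2 X q"] pf(4,5,6) by (simp add: norm_eq_1[symmetric])
    then have "norm (e1 X q \<times> e2 X q) = 1" by (smt (verit) norm_ge_zero power2_eq_1_iff)
    then show ?thesis using pf(7) by simp
  qed
  show N1: "norm (unit_normal X (\<alpha> t)) = 1" using Nq q_def by simp
  have Tq: "tangent x t = cos (\<sigma> t) *\<^sub>R e1 X q + sin (\<sigma> t) *\<^sub>R e2 X q" using cpI q_def by simp
  show TN: "tangent x t \<bullet> unit_normal X (\<alpha> t) = 0"
    unfolding q_def[symmetric] Tq pf(7) by (simp add: inner_add_left dot_cross_self)
  have T1: "norm (tangent x t) = 1" using cpI by blast
  show "darboux_g x (\<lambda>s. unit_normal X (\<alpha> s)) t \<bullet> darboux_g x (\<lambda>s. unit_normal X (\<alpha> s)) t = 1"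
  proof -
    have "(norm (unit_normal X (\<alpha> t) \<times> tangent x t))^2 = 1"
      using norm_cross_dot[of "unit_normal X (\<alpha> t)" "tangent x t"] N1 T1 TN by (simp add: inner_commute)
    then show ?thesis by (simp add: darboux_g_def power2_norm_eq_inner)
  qed
  obtain av where da: "(\<alpha> has_vector_derivative av) (at t)"
    using cpI vector_derivative_works by blast
  obtain DU where hU: "(Xu X has_derivative DU) (at q)" using rpU differentiable_def by blast
  obtain DV where hV: "(Xv X has_derivative DV) (at q)" using rpU differentiable_def by blast
  have dw: "((\<lambda>s. Xu X (\<alpha> s)) has_vector_derivative DU av) (at t)"
    using chain_fd[OF da] hU q_def by simp
  have dz: "((\<lambda>s. Xv X (\<alpha> s)) has_vector_derivative DV av) (at t)"
    using chain_fd[OF da] hV q_def by simp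
  have dc: "((\<lambda>s. Xu X (\<alpha> s) \<times> Xv X (\<alpha> s)) has_vector_derivative
      (Xu X (\<alpha> t) \<times> DV av + DU av \<times> Xv X (\<alpha> t))) (at t)"
    by (rule vd_cross[OF dw dz])
  have cnz: "Xu X (\<alpha> t) \<times> Xv X (\<alpha> t) \<noteq> 0" using rpU q_def by simp
  obtain N' where dN: "((\<lambda>s. unit_normal X (\<alpha> s)) has_vector_derivative N') (at t)"
    using normalize_vd[OF dc cnz] unfolding unit_normal_def by blast
  obtain T' where dT: "(tangent x has_vector_derivative T') (at t)"
    using cpI vector_derivative_works by blast
  show "\<exists>D. (darboux_g x (\<lambda>s. unit_normal X (\<alpha> s)) has_vector_derivative D) (at t)"
    unfolding darboux_g_def using vd_cross[OF dN dT] by blast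
qed

theorem corollary2:
  fixes X X1 :: "real * real \<Rightarrow> real^3"
    and U U1 :: "(real * real) set"
    and \<alpha> \<alpha>1 :: "real \<Rightarrow> real * real"
    and x x1 :: "real \<Rightarrow> real^3"
    and \<sigma> \<sigma>1 \<phi> :: "real \<Rightarrow> real"
    and I I1 :: "real set"
    and lam :: real
  assumes "regular_patch X U" and "orthogonal_patch X U"
    and "regular_patch X1 U1" and "orthogonal_patch X1 U1"
    and "curve_on_patch X U \<alpha> I x \<sigma>"
    and "curve_on_patch X1 U1 \<alpha>1 I1 x1 \<sigma>1"
    and "bertrand_D_pair x (\<lambda>s. unit_normal X (\<alpha> s)) I
                         x1 (\<lambda>s. unit_normal X1 (\<alpha>1 s)) I1 \<phi> lam"
    and "s \<in> I"
  shows "(deriv \<sigma> s + kg_ucurve X (\<alpha> s) * cos (\<sigma> s) + kg_vcurve X (\<alpha> s) * sin (\<sigma> s))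
       - (deriv \<sigma>1 (\<phi> s) + kg_ucurve X1 (\<alpha>1 (\<phi> s)) * cos (\<sigma>1 (\<phi> s))
                           + kg_vcurve X1 (\<alpha>1 (\<phi> s)) * sin (\<sigma>1 (\<phi> s)))
       = lam * ((deriv \<sigma> s + kg_ucurve X (\<alpha> s) * cos (\<sigma> s) + kg_vcurve X (\<alpha> s) * sin (\<sigma> s))
              * (deriv \<sigma>1 (\<phi> s) + kg_ucurve X1 (\<alpha>1 (\<phi> s)) * cos (\<sigma>1 (\<phi> s))
                                  + kg_vcurve X1 (\<alpha>1 (\<phi> s)) * sin (\<sigma>1 (\<phi> s)))
              - geodesic_torsion x (\<lambda>s. unit_normal X (\<alpha> s)) s
                * geodesic_torsion x1 (\<lambda>s. unit_normal X1 (\<alpha>1 s)) (\<phi> s))"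
proof -
  note rp = assms(1) and op = assms(2) and rp1 = assms(3) and op1 = assms(4)
    and cp = assms(5) and cp1 = assms(6) and bp = assms(7) and sI = assms(8)
  have bij: "bij_betw \<phi> I I1" using bp by (simp add: bertrand_D_pair_def)
  have sI1: "\<phi> s \<in> I1" using bij sI bij_betwE by blast
  have oI: "open I" using cp by (simp add: curve_on_patch_def)
  have oI1: "open I1" using cp1 by (simp add: curve_on_patch_def)
  have pr: "\<And>t. t \<in> I \<Longrightarrow> darboux_g x (\<lambda>s. unit_normal X (\<alpha> s)) t = darboux_g x1 (\<lambda>s. unit_normal X1 (\<alpha>1 s)) (\<phi> t) \<and>
                 x t = x1 (\<phi> t) + lam *\<^sub>R darboux_g x1 (\<lambda>s. unit_normal X1 (\<alpha>1 s)) (\<phi> t)"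
    using bp unfolding bertrand_D_pair_def by blast
  have phid: "\<phi> differentiable (at s)" using bp sI unfolding bertrand_D_pair_def by blast
  have dphi: "(\<phi> has_real_derivative deriv \<phi> s) (at s)"
    using phid DERIV_deriv_iff_real_differentiable by blast
  have cp1I: "x1 differentiable (at (\<phi> s)) \<and> tangent x1 differentiable (at (\<phi> s))"
    using cp1 sI1 unfolding curve_on_patch_def by blast
  have cpI: "tangent x differentiable (at s)"
    using cp sI unfolding curve_on_patch_def by blast
  have dx1: "(x1 has_vector_derivative tangent x1 (\<phi> s)) (at (\<phi> s))"
    unfolding tangent_def using cp1I vector_derivative_works by blast
  obtain D where dG1: "(darboux_g x1 (\<lambda>s. unit_normal X1 (\<alpha>1 s)) has_vector_derivative D) (at (\<phi> s))"
    using frame(4)[OF rp1 op1 cp1 sI1] by blast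
  have dT1: "(tangent x1 has_vector_derivative vector_derivative (tangent x1) (at (\<phi> s))) (at (\<phi> s))"
    using cp1I vector_derivative_works by blast
  have dT: "(tangent x has_vector_derivative vector_derivative (tangent x) (at s)) (at s)"
    using cpI vector_derivative_works by blast
  have u1: "norm (tangent x1 (\<phi> s)) = 1" using cp1 sI1 unfolding curve_on_patch_def by blast
  have u: "norm (tangent x s) = 1" using cp sI unfolding curve_on_patch_def by blast
  note core = bertrand_core[OF oI sI oI1 sI1 dphi dx1 dG1 dT1 dT
      frame(1)[OF rp1 op1 cp1 sI1] u1 frame(2)[OF rp1 op1 cp1 sI1]
      frame(1)[OF rp op cp sI] u frame(2)[OF rp op cp sI]
      frame(3)[OF rp1 op1 cp1] pr]
  show ?thesis
    using core liouville[OF rp op cp sI] liouville[OF rp1 op1 cp1 sI1] by simp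
qed


end
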